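(* Every connected $D$-regular graph $G=(V,E)$ which is curvature sharp at all vertices has constant Bakry-\'Emery curvature, i.e. there is $\mathcal K\in\mathbb R$ with $\mathcal K_\infty(x)=\mathcal K$ for all $x\in V$.
   Context: For $f:V\to\mathbb R$, $\Delta f(x)=\sum_{y\sim x}(f(y)-f(x))$, $2\Gamma(f,g)=\Delta(fg)-f\Delta g-g\Delta f$, $2\Gamma_2(f,g)=\Delta\Gamma(f,g)-\Gamma(f,\Delta g)-\Gamma(g,\Delta f)$. The Bakry-\'Emery curvature $\mathcal K_\infty(x)$ is the supremum of all $K\in\mathbb R$ with $\Gamma_2(f,f)(x)\ge K\Gamma(f,f)(x)$ for all $f$. For a $D$-regular graph, $\mathcal K_\infty(x)\le 2+\#_\Delta(x)/D$ where $\#_\Delta(x)$ is the number of triangles containing $x$; $x$ is curvature sharp if equality holds. *)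

theory Defs
  imports Main Complex_Main
begin

definition simple_graph :: "'a set \<Rightarrow> ('a \<Rightarrow> 'a \<Rightarrow> bool) \<Rightarrow> bool" where
  "simple_graph V E \<longleftrightarrow> (\<forall>x y. E x y \<longrightarrow> x \<in> V \<and> y \<in> V \<and> E y x \<and> x \<noteq> y)"

definition nbrs :: "('a \<Rightarrow> 'a \<Rightarrow> bool) \<Rightarrow> 'a \<Rightarrow> 'a set" where
  "nbrs E x = {y. E x y}"

definition regular_graph :: "'a set \<Rightarrow> ('a \<Rightarrow> 'a \<Rightarrow> bool) \<Rightarrow> nat \<Rightarrow> bool" where
  "regular_graph V E D \<longleftrightarrow> (\<forall>x\<in>V. finite (nbrs E x) \<and> card (nbrs E x) = D)"

definition connected_graph :: "'a set \<Rightarrow> ('a \<Rightarrow> 'a \<Rightarrow> bool) \<Rightarrow> bool" where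
  "connected_graph V E \<longleftrightarrow> (\<forall>x\<in>V. \<forall>y\<in>V. E\<^sup>*\<^sup>* x y)"

definition laplacian :: "('a \<Rightarrow> 'a \<Rightarrow> bool) \<Rightarrow> ('a \<Rightarrow> real) \<Rightarrow> 'a \<Rightarrow> real" where
  "laplacian E f x = (\<Sum>y\<in>nbrs E x. f y - f x)"

definition Gamma :: "('a \<Rightarrow> 'a \<Rightarrow> bool) \<Rightarrow> ('a \<Rightarrow> real) \<Rightarrow> ('a \<Rightarrow> real) \<Rightarrow> 'a \<Rightarrow> real" where
  "Gamma E f g x = (laplacian E (\<lambda>z. f z * g z) x - f x * laplacian E g x
                     - g x * laplacian E f x) / 2"

definition Gamma2 :: "('a \<Rightarrow> 'a \<Rightarrow> bool) \<Rightarrow> ('a \<Rightarrow> real) \<Rightarrow> ('a \<Rightarrow> real) \<Rightarrow> 'a \<Rightarrow> real" where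
  "Gamma2 E f g x = (laplacian E (Gamma E f g) x - Gamma E f (laplacian E g) x
                      - Gamma E g (laplacian E f) x) / 2"

definition BE_curvature :: "('a \<Rightarrow> 'a \<Rightarrow> bool) \<Rightarrow> 'a \<Rightarrow> real" where
  "BE_curvature E x = Sup {K. \<forall>f. Gamma2 E f f x \<ge> K * Gamma E f f x}"

definition num_triangles :: "('a \<Rightarrow> 'a \<Rightarrow> bool) \<Rightarrow> 'a \<Rightarrow> nat" where
  "num_triangles E x = card {{y, z} | y z. E x y \<and> E x z \<and> E y z}"

definition curvature_sharp :: "('a \<Rightarrow> 'a \<Rightarrow> bool) \<Rightarrow> nat \<Rightarrow> 'a \<Rightarrow> bool" where
  "curvature_sharp E D x \<longleftrightarrow> BE_curvature E x = 2 + real (num_triangles E x) / real D"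

end

theory Submission
  imports Defs
begin

lemma Gamma_alt: "Gamma E f g v = (\<Sum>w\<in>nbrs E v. (f w - f v) * (g w - g v)) / 2"
proof -
  have "(\<Sum>w\<in>nbrs E v. (f w - f v) * (g w - g v)) =
    (\<Sum>w\<in>nbrs E v. f w * g w - f v * g v) - f v * (\<Sum>w\<in>nbrs E v. g w - g v) - g v * (\<Sum>w\<in>nbrs E v. f w - f v)"
    by (simp add: sum_distrib_left sum_subtractf[symmetric] algebra_simps)
  then show ?thesis unfolding Gamma_def laplacian_def by simp
qed

lemma Gamma_nonneg: "Gamma E f f v \<ge> 0"
  unfolding Gamma_alt by (auto intro!: sum_nonneg)

lemma Gamma2_expand:
  "2 * Gamma2 E f f x = (\<Sum>y\<in>nbrs E x. \<Sum>w\<in>nbrs E y. (f w - f y)^2/2 - (f y - f x)*(f w - f y))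
     - real (card (nbrs E x)) * Gamma E f f x + (laplacian E f x)^2"
proof -
  let ?N = "nbrs E x"
  have 1: "laplacian E (Gamma E f f) x = (\<Sum>y\<in>?N. Gamma E f f y) - real (card ?N) * Gamma E f f x"
    unfolding laplacian_def by (simp add: sum_subtractf)
  have 2: "2 * Gamma E f (laplacian E f) x = (\<Sum>y\<in>?N. (f y - f x) * laplacian E f y) - (laplacian E f x)^2"
  proof -
    have "2 * Gamma E f (laplacian E f) x = (\<Sum>y\<in>?N. (f y - f x) * laplacian E f y) - laplacian E f x * (\<Sum>y\<in>?N. (f y - f x))"
      unfolding Gamma_alt by (simp add: sum_distrib_left sum_subtractf[symmetric] algebra_simps)
    also have "(\<Sum>y\<in>?N. (f y - f x)) = laplacian E f x" unfolding laplacian_def ..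
    finally show ?thesis by (simp add: power2_eq_square)
  qed
  have 3: "(\<Sum>y\<in>?N. Gamma E f f y) - (\<Sum>y\<in>?N. (f y - f x) * laplacian E f y)
     = (\<Sum>y\<in>?N. \<Sum>w\<in>nbrs E y. (f w - f y)^2/2 - (f y - f x)*(f w - f y))"
    unfolding Gamma_alt laplacian_def
    by (simp add: sum_subtractf[symmetric] sum_distrib_left sum_divide_distrib power2_eq_square)
  show ?thesis unfolding Gamma2_def using 1 2 3 by simp
qed


lemma sg_sym: "simple_graph V E \<Longrightarrow> E x y \<Longrightarrow> E y x"
  unfolding simple_graph_def by blast
lemma sg_irr: "simple_graph V E \<Longrightarrow> \<not> E x x"
  unfolding simple_graph_def by blast
lemma sg_V: "simple_graph V E \<Longrightarrow> E x y \<Longrightarrow> y \<in> V"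
  unfolding simple_graph_def by blast

lemma Gamma2_lower:
  assumes sg: "simple_graph V E" and reg: "regular_graph V E D" and x: "x \<in> V"
  shows "Gamma2 E f f x \<ge> - real D * Gamma E f f x"
proof -
  let ?N = "nbrs E x"
  have cx: "card ?N = D" using reg x unfolding regular_graph_def by auto
  have inner: "(\<Sum>w\<in>nbrs E y. (f w - f y)^2/2 - (f y - f x)*(f w - f y)) \<ge> - real D * (f y - f x)^2 / 2"
    if y: "y \<in> ?N" for y
  proof -
    have yV: "y \<in> V" using y sg_V[OF sg] unfolding nbrs_def by auto
    have cy: "card (nbrs E y) = D" using reg yV unfolding regular_graph_def by auto
    have "(\<Sum>w\<in>nbrs E y. (f w - f y)^2/2 - (f y - f x)*(f w - f y)) \<ge> (\<Sum>w\<in>nbrs E y. (- ((f y - f x)^2/2)))"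
    proof (rule sum_mono)
      fix w
      have "0 \<le> ((f w - f y) - (f y - f x))^2/2" by simp
      moreover have "(f w - f y)^2/2 - (f y - f x)*(f w - f y) - (- ((f y - f x)^2/2)) = ((f w - f y) - (f y - f x))^2/2"
        by (simp add: power2_eq_square field_simps)
      ultimately show "(- ((f y - f x)^2/2)) \<le> (f w - f y)^2/2 - (f y - f x)*(f w - f y)"
        by linarith
    qed
    then show ?thesis using cy by simp
  qed
  have "(\<Sum>y\<in>?N. \<Sum>w\<in>nbrs E y. (f w - f y)^2/2 - (f y - f x)*(f w - f y)) \<ge> (\<Sum>y\<in>?N. - real D * (f y - f x)^2 / 2)"
    by (rule sum_mono) (rule inner)
  also have "(\<Sum>y\<in>?N. - real D * (f y - f x)^2 / 2) = - real D * Gamma E f f x"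
    unfolding Gamma_alt by (simp add: sum_distrib_left sum_divide_distrib power2_eq_square)
  finally have "2 * Gamma2 E f f x \<ge> - real D * Gamma E f f x - real D * Gamma E f f x + (laplacian E f x)^2"
    using Gamma2_expand[of E f x] cx by simp
  moreover have "(laplacian E f x)^2 \<ge> 0" by simp
  ultimately show ?thesis by linarith
qed

lemma sharp_ineq:
  assumes sg: "simple_graph V E" and reg: "regular_graph V E D" and x: "x \<in> V"
  shows "Gamma2 E f f x \<ge> BE_curvature E x * Gamma E f f x"
proof -
  let ?S = "{K. \<forall>f. Gamma2 E f f x \<ge> K * Gamma E f f x}"
  have ne: "- real D \<in> ?S" using Gamma2_lower[OF sg reg x] by blast
  show ?thesis
  proof (cases "Gamma E f f x = 0")
    case True
    then show ?thesis using Gamma2_lower[OF sg reg x, of f] by simp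
  next
    case False
    then have pos: "Gamma E f f x > 0" using Gamma_nonneg[of E f x] by linarith
    have "Sup ?S \<le> Gamma2 E f f x / Gamma E f f x"
    proof (rule cSup_least)
      show "?S \<noteq> {}" using ne by blast
      fix K assume "K \<in> ?S"
      then have "K * Gamma E f f x \<le> Gamma2 E f f x" by blast
      then show "K \<le> Gamma2 E f f x / Gamma E f f x" using pos by (simp add: field_simps)
    qed
    then show ?thesis unfolding BE_curvature_def using pos by (simp add: field_simps)
  qed
qed


lemma sum_split3:
  assumes "finite S" "x \<in> S" "x \<notin> M"
  shows "sum g S = g x + sum g (S \<inter> M) + sum g (S - M - {x})"
proof -
  have "sum g S = g x + sum g (S - {x})" using assms by (simp add: sum.remove)
  moreover have "S - {x} = (S \<inter> M) \<union> (S - M - {x})" using assms by auto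
  moreover have "sum g ((S \<inter> M) \<union> (S - M - {x})) = sum g (S \<inter> M) + sum g (S - M - {x})"
    using assms by (intro sum.union_disjoint) auto
  ultimately show ?thesis by (simp add: add.assoc)
qed

lemma triangles_count:
  assumes sg: "simple_graph V E" and fin: "finite (nbrs E x)"
  shows "2 * num_triangles E x = (\<Sum>y\<in>nbrs E x. card (nbrs E y \<inter> nbrs E x))"
proof -
  let ?N = "nbrs E x"
  let ?T = "{{y, z} | y z. E x y \<and> E x z \<and> E y z}"
  let ?P = "{(y,z). E x y \<and> E x z \<and> E y z}"
  let ?F = "\<lambda>t. {(a,b). a \<in> t \<and> b \<in> t \<and> a \<noteq> b}"
  have PS: "?P = (SIGMA y:?N. nbrs E y \<inter> ?N)" unfolding nbrs_def by auto
  have cP: "card ?P = (\<Sum>y\<in>?N. card (nbrs E y \<inter> ?N))"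
    unfolding PS using fin by (subst card_SigmaI) auto
  have Tsub: "?T \<subseteq> Pow ?N" unfolding nbrs_def by auto
  have finT: "finite ?T" using fin Tsub by (meson finite_Pow_iff finite_subset)
  have U: "?P = (\<Union>t\<in>?T. ?F t)"
  proof
    show "?P \<subseteq> (\<Union>t\<in>?T. ?F t)"
    proof
      fix p assume "p \<in> ?P"
      then obtain a b where p: "p = (a,b)" "E x a" "E x b" "E a b" by auto
      then have "a \<noteq> b" using sg_irr[OF sg] by blast
      then show "p \<in> (\<Union>t\<in>?T. ?F t)" using p by blast
    qed
  next
    show "(\<Union>t\<in>?T. ?F t) \<subseteq> ?P"
    proof
      fix p assume "p \<in> (\<Union>t\<in>?T. ?F t)"
      then obtain y z a b where "p = (a,b)" "E x y" "E x z" "E y z" "a \<in> {y,z}" "b \<in> {y,z}" "a \<noteq> b"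
        by blast
      then show "p \<in> ?P" using sg_sym[OF sg] by auto
    qed
  qed
  have cF: "card (?F t) = 2" if "t \<in> ?T" for t
  proof -
    obtain y z where t: "t = {y,z}" "E x y" "E x z" "E y z" using \<open>t \<in> ?T\<close> by blast
    have "y \<noteq> z" using t sg_irr[OF sg] by blast
    have "?F t = {(y,z),(z,y)}" using t \<open>y \<noteq> z\<close> by auto
    then show ?thesis using \<open>y \<noteq> z\<close> by simp
  qed
  have finF: "finite (?F t)" if "t \<in> ?T" for t
  proof -
    have "?F t \<subseteq> t \<times> t" by auto
    moreover have "finite t" using that by auto
    ultimately show ?thesis by (meson finite_SigmaI finite_subset)
  qed
  have disj: "\<forall>s\<in>?T. \<forall>t\<in>?T. s \<noteq> t \<longrightarrow> ?F s \<inter> ?F t = {}"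
  proof (intro ballI impI)
    fix s t assume s: "s \<in> ?T" and t: "t \<in> ?T" and st: "s \<noteq> t"
    show "?F s \<inter> ?F t = {}"
    proof (rule ccontr)
      assume "?F s \<inter> ?F t \<noteq> {}"
      then obtain a b where ab: "(a,b) \<in> ?F s" "(a,b) \<in> ?F t" by auto
      obtain y z where sy: "s = {y,z}" using s by blast
      obtain y' z' where ty: "t = {y',z'}" using t by blast
      have "s = {a,b}" using ab sy by auto
      moreover have "t = {a,b}" using ab ty by auto
      ultimately show False using st by simp
    qed
  qed
  have "card ?P = (\<Sum>t\<in>?T. card (?F t))"
    unfolding U using finT finF disj by (subst card_UN_disjoint) auto
  also have "\<dots> = (\<Sum>t\<in>?T. 2)" using cF by simp
  also have "\<dots> = 2 * card ?T" by simp
  finally show ?thesis using cP unfolding num_triangles_def by simp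
qed


lemma poly_zero:
  fixes a b :: real
  assumes "\<forall>e. a * e + b * e^2 \<ge> 0"
  shows "a = 0"
proof (rule ccontr)
  assume a: "a \<noteq> 0"
  define B where "B = \<bar>b\<bar> + 1"
  have B: "B > 0" "b < B" unfolding B_def by auto
  define e where "e = - a / B"
  have "a * e + b * e^2 = a^2 * (b - B) / B^2"
    unfolding e_def using B by (simp add: field_simps power2_eq_square)
  moreover have "a^2 * (b - B) / B^2 < 0"
    using a B by (intro divide_neg_pos mult_pos_neg) auto
  ultimately show False using assms by (metis not_le)
qed

lemma sharp_common:
  assumes sg: "simple_graph V E" and reg: "regular_graph V E D" and x: "x \<in> V"
    and sharp: "curvature_sharp E D x" and y0: "E x y0"
  shows "BE_curvature E x = 2 + real (card (nbrs E y0 \<inter> nbrs E x)) / 2"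
proof -
  let ?N = "nbrs E x"
  define c where "c y = card (nbrs E y \<inter> ?N)" for y
  define Sc where "Sc = (\<Sum>y\<in>?N. real (c y))"
  define \<kappa> where "\<kappa> = BE_curvature E x"
  have finN: "finite ?N" and cN: "card ?N = D" using reg x unfolding regular_graph_def by auto
  have y0N: "y0 \<in> ?N" using y0 unfolding nbrs_def by simp
  have D1: "D \<ge> 1" using finN cN y0N by (metis One_nat_def Suc_leI card_gt_0_iff empty_iff)
  have tri: "2 * real (num_triangles E x) = Sc"
    unfolding Sc_def c_def using triangles_count[OF sg finN] by (metis of_nat_mult of_nat_numeral of_nat_sum)
  have kap: "\<kappa> * real D = 2 * real D + Sc / 2"
    using sharp D1 tri unfolding \<kappa>_def curvature_sharp_def by (simp add: field_simps)
  have yV: "y \<in> V" if "y \<in> ?N" for y using that sg_V[OF sg] unfolding nbrs_def by auto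
  have xny: "x \<in> nbrs E y" if "y \<in> ?N" for y using that sg_sym[OF sg] unfolding nbrs_def by auto
  have xnN: "x \<notin> ?N" using sg_irr[OF sg] unfolding nbrs_def by auto
  have finy: "finite (nbrs E y)" and cy: "card (nbrs E y) = D" if "y \<in> ?N" for y
    using reg yV[OF that] unfolding regular_graph_def by auto
  have crest: "real (card (nbrs E y - ?N - {x})) = real D - 1 - real (c y)" if "y \<in> ?N" for y
  proof -
    have "(\<Sum>w\<in>nbrs E y. (1::real)) = 1 + (\<Sum>w\<in>nbrs E y \<inter> ?N. 1) + (\<Sum>w\<in>nbrs E y - ?N - {x}. 1)"
      by (rule sum_split3[OF finy[OF that] xny[OF that] xnN])
    then show ?thesis using cy[OF that] unfolding c_def by simp
  qed
  have main: "\<forall>e. (4 + real (c y0) - 2 * \<kappa>) * e + (real (c y0) / 2 + real D + 1 - \<kappa>) * e^2 \<ge> 0"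
  proof
    fix e :: real
    define f where "f v = (if v = x then 0 else if E x v then (if v = y0 then 1 + e else 1) else 2)" for v
    let ?t = "\<lambda>y w. (f w - f y)^2/2 - (f y - f x)*(f w - f y)"
    have fx: "f x = 0" unfolding f_def by simp
    have inner_gen: "(\<Sum>w\<in>nbrs E y. ?t y w) = ?t y x + (\<Sum>w\<in>nbrs E y \<inter> ?N. ?t y w)
       + (real D - 1 - real (c y)) * ((2 - f y)^2/2 - f y * (2 - f y))" if y: "y \<in> ?N" for y
    proof -
      have "(\<Sum>w\<in>nbrs E y - ?N - {x}. ?t y w) = (\<Sum>w\<in>nbrs E y - ?N - {x}. (2 - f y)^2/2 - f y * (2 - f y))"
        by (rule sum.cong) (auto simp: f_def nbrs_def)
      then show ?thesis using sum_split3[OF finy[OF y] xny[OF y] xnN, of "?t y"] crest[OF y] fx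
        by (simp add: mult.commute)
    qed
    have inner_other: "(\<Sum>w\<in>nbrs E y. ?t y w) = 3/2 + (if E y y0 then e^2/2 - e else 0)
       - (real D - 1 - real (c y)) / 2" if y: "y \<in> ?N" "y \<noteq> y0" for y
    proof -
      have fy: "f y = 1" using y sg_irr[OF sg] unfolding f_def nbrs_def by auto
      have "(\<Sum>w\<in>nbrs E y \<inter> ?N. ?t y w) = (\<Sum>w\<in>nbrs E y \<inter> ?N. if w = y0 then e^2/2 - e else 0)"
        by (rule sum.cong) (insert y, auto simp: f_def nbrs_def fy sg_irr[OF sg] power2_eq_square algebra_simps)
      also have "\<dots> = (if E y y0 then e^2/2 - e else 0)"
        using finy[OF y(1)] y0 by (simp add: nbrs_def)
      finally show ?thesis using inner_gen[OF y(1)] fy fx by (simp add: field_simps)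
    qed
    have fy0: "f y0 = 1 + e" using y0 sg_irr[OF sg] unfolding f_def by auto
    have inner_y0: "(\<Sum>w\<in>nbrs E y0. ?t y0 w) = 3/2 * (1+e)^2 + real (c y0) * (e^2/2 + (1+e)*e)
       + (real D - 1 - real (c y0)) * ((1 - e)^2/2 - (1+e)*(1-e))"
    proof -
      have "(\<Sum>w\<in>nbrs E y0 \<inter> ?N. ?t y0 w) = (\<Sum>w\<in>nbrs E y0 \<inter> ?N. e^2/2 + (1+e)*e)"
        by (rule sum.cong) (insert y0 sg_irr[OF sg, of x], auto simp: f_def nbrs_def fy0 sg_irr[OF sg] power2_eq_square algebra_simps)
      also have "\<dots> = real (c y0) * (e^2/2 + (1+e)*e)" unfolding c_def by simp
      finally show ?thesis using inner_gen[OF y0N] fy0 fx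
        by (simp add: power2_eq_square algebra_simps) (simp add: field_simps)
    qed
    have cnt: "card {y \<in> ?N - {y0}. E y y0} = c y0"
    proof -
      have "{y \<in> ?N - {y0}. E y y0} = nbrs E y0 \<inter> ?N"
        using sg_sym[OF sg] sg_irr[OF sg] unfolding nbrs_def by blast
      then show ?thesis unfolding c_def by simp
    qed
    have sum_other: "(\<Sum>y\<in>?N - {y0}. \<Sum>w\<in>nbrs E y. ?t y w)
       = (real D - 1) * 3/2 + real (c y0) * (e^2/2 - e) - ((real D - 1) * (real D - 1) - (Sc - real (c y0))) / 2"
    proof -
      have "(\<Sum>y\<in>?N - {y0}. \<Sum>w\<in>nbrs E y. ?t y w) = (\<Sum>y\<in>?N - {y0}. 3/2 + (if E y y0 then e^2/2 - e else 0)
       - (real D - 1 - real (c y)) / 2)"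
        by (rule sum.cong) (auto simp: inner_other)
      also have "\<dots> = (\<Sum>y\<in>?N - {y0}. 3/2) + (\<Sum>y\<in>?N - {y0}. if E y y0 then e^2/2 - e else 0)
         - (\<Sum>y\<in>?N - {y0}. (real D - 1)/2) + (\<Sum>y\<in>?N - {y0}. real (c y) / 2)"
        by (simp add: sum.distrib sum_subtractf diff_divide_distrib) (simp add: field_simps)
      also have "(\<Sum>y\<in>?N - {y0}. if E y y0 then e^2/2 - e else 0) = real (c y0) * (e^2/2 - e)"
        using finN cnt by (simp add: sum.inter_filter[symmetric])
      also have "(\<Sum>y\<in>?N - {y0}. real (c y) / 2) = (Sc - real (c y0)) / 2"
        unfolding Sc_def using finN y0N by (simp add: sum_divide_distrib[symmetric] sum_diff1)
      finally show ?thesis using D1 cN y0N finN by (simp add: of_nat_diff field_simps)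
    qed
    have T: "(\<Sum>y\<in>?N. \<Sum>w\<in>nbrs E y. ?t y w) = (\<Sum>w\<in>nbrs E y0. ?t y0 w) + (\<Sum>y\<in>?N - {y0}. \<Sum>w\<in>nbrs E y. ?t y w)"
      using finN y0N by (simp add: sum.remove)
    have fN: "f y = (if y = y0 then 1 + e else 1)" if "y \<in> ?N" for y
      using that xnN unfolding f_def nbrs_def by auto
    have G: "2 * Gamma E f f x = (1+e)^2 + (real D - 1)"
    proof -
      have "2 * Gamma E f f x = (\<Sum>y\<in>?N. (f y - f x) * (f y - f x))" unfolding Gamma_alt by simp
      also have "\<dots> = (\<Sum>y\<in>?N. if y = y0 then (1+e)^2 else 1)"
        by (rule sum.cong) (auto simp: fN fx power2_eq_square)
      also have "\<dots> = (1+e)^2 + (\<Sum>y\<in>?N - {y0}. 1)"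
        using finN y0N by (simp add: sum.remove)
      finally show ?thesis using cN y0N finN D1 by (simp add: of_nat_diff)
    qed
    have L: "laplacian E f x = (1+e) + (real D - 1)"
    proof -
      have "laplacian E f x = (\<Sum>y\<in>?N. if y = y0 then 1+e else 1)"
        unfolding laplacian_def by (rule sum.cong) (auto simp: fN fx)
      also have "\<dots> = (1+e) + (\<Sum>y\<in>?N - {y0}. 1)"
        using finN y0N by (simp add: sum.remove)
      finally show ?thesis using cN y0N finN D1 by (simp add: of_nat_diff)
    qed
    have Gx: "Gamma E f f x = ((1+e)^2 + (real D - 1)) / 2" using G by simp
    have ineq: "Gamma2 E f f x \<ge> \<kappa> * Gamma E f f x"
      unfolding \<kappa>_def by (rule sharp_ineq[OF sg reg x])
    have e2: "2 * Gamma2 E f f x = (\<Sum>y\<in>?N. \<Sum>w\<in>nbrs E y. ?t y w) - real D * Gamma E f f x + (laplacian E f x)^2"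
      using Gamma2_expand[of E f x] cN by simp
    have "0 \<le> 2 * Gamma2 E f f x - \<kappa> * (2 * Gamma E f f x)" using ineq by simp
    also have "\<dots> = (4 + real (c y0) - 2 * \<kappa>) * e + (real (c y0) / 2 + real D + 1 - \<kappa>) * e^2"
      unfolding e2 T inner_y0 sum_other L
      using kap by (simp add: Gx power2_eq_square field_simps)
    finally show "(4 + real (c y0) - 2 * \<kappa>) * e + (real (c y0) / 2 + real D + 1 - \<kappa>) * e^2 \<ge> 0" .
  qed
  have "4 + real (c y0) - 2 * \<kappa> = 0" by (rule poly_zero[OF main])
  then show ?thesis unfolding \<kappa>_def c_def by simp
qed


theorem mainTheorem3:
  fixes V :: "'a set" and E :: "'a \<Rightarrow> 'a \<Rightarrow> bool" and D :: nat
  assumes "simple_graph V E"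
    and "regular_graph V E D"
    and "connected_graph V E"
    and "\<forall>x\<in>V. curvature_sharp E D x"
  shows "\<exists>K::real. \<forall>x\<in>V. BE_curvature E x = K"
proof (cases "V = {}")
  case True
  then show ?thesis by simp
next
  case False
  then obtain x0 where x0: "x0 \<in> V" by blast
  have adj: "BE_curvature E y = BE_curvature E x" if "x \<in> V" "E x y" for x y
  proof -
    have yV: "y \<in> V" using sg_V[OF assms(1) that(2)] .
    have "BE_curvature E x = 2 + real (card (nbrs E y \<inter> nbrs E x)) / 2"
      using sharp_common[OF assms(1,2) that(1)] assms(4) that by blast
    moreover have "BE_curvature E y = 2 + real (card (nbrs E x \<inter> nbrs E y)) / 2"
      using sharp_common[OF assms(1,2) yV] assms(4) yV sg_sym[OF assms(1) that(2)] by blast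
    ultimately show ?thesis by (simp add: Int_commute)
  qed
  have "z \<in> V \<and> BE_curvature E z = BE_curvature E x0" if "E\<^sup>*\<^sup>* x0 z" for z
    using that
  proof (induction rule: rtranclp_induct)
    case base
    then show ?case using x0 by simp
  next
    case (step y z)
    then show ?case using adj sg_V[OF assms(1)] by metis
  qed
  then show ?thesis using assms(3) x0 unfolding connected_graph_def by blast
qed

end
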